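(* Let $q\in(0,1)$ and let $w\ge 2$ be an integer. Consider a clique of size $w$ with vertices $u,1,2,\dots,w-1$, where $u$ (the parent of the clique) is initially active and $1,\dots,w-1$ (the children inside the clique) are initially inactive. For $1\le i\le w-1$, vertex $i$ has, besides the $w-1$ other clique vertices, exactly $X_i$ further neighbors (its own children), which are inactive and remain inactive throughout; thus vertex $i$ has degree $X_i+w-1$. The contagion evolves in discrete time: an inactive vertex $i$ becomes active as soon as its proportion of active neighbors is strictly greater than $q$, and active vertices remain active. Let $L$ be the final number of active vertices among $1,\dots,w-1$, and let $X_{(1)}\le X_{(2)}\le\dots\le X_{(w-1)}$ be the order statistics of $(X_i)_{1\le i\le w-1}$. Then $$L=\min\Big\{i\in\{1,\dots,w-1\}\;\Big|\;\lfloor q(X_{(i)}+w-1)\rfloor+1>i\Big\}-1,$$ with the convention $L=w-1$ if this set is empty (i.e. if $\lfloor q(X_{(i)}+w-1)\rfloor+1\le i$ for all $1\le i\le w-1$).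
   Context: The $X_i$ are nonnegative integers. In the paper's setting, this clique is a clique of the random graph obtained as the one-mode projection of an alternating branching process, and $X_i$ is the number of children of vertex $i$ in that graph. *)

theory Defs
  imports Main "HOL.Real"
begin

text \<open>Clique vertices: parent u (always active) and children 1..w-1.
  Child i has degree X i + w - 1: u, the other w-2 children, and X i own children
  (which stay inactive).\<close>

definition clique_step :: "real \<Rightarrow> nat \<Rightarrow> (nat \<Rightarrow> nat) \<Rightarrow> nat set \<Rightarrow> nat set" where
  "clique_step q w X A = A \<union>
     {i \<in> {1..<w}. i \<notin> A \<and>
        real (1 + card (A - {i})) / real (X i + w - 1) > q}"

primrec clique_active :: "real \<Rightarrow> nat \<Rightarrow> (nat \<Rightarrow> nat) \<Rightarrow> nat \<Rightarrow> nat set" where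
  "clique_active q w X 0 = {}"
| "clique_active q w X (Suc t) = clique_step q w X (clique_active q w X t)"

definition final_active :: "real \<Rightarrow> nat \<Rightarrow> (nat \<Rightarrow> nat) \<Rightarrow> nat" where
  "final_active q w X = card (\<Union>t. clique_active q w X t)"

definition order_stat :: "nat \<Rightarrow> (nat \<Rightarrow> nat) \<Rightarrow> nat \<Rightarrow> nat" where
  "order_stat w X i = sort (map X [1..<w]) ! (i - 1)"

end

theory Submission
  imports Defs
begin

lemma sorted_filter_count:
  fixes h :: "nat \<Rightarrow> nat" and ys :: "nat list"
  assumes "sorted ys" and "mono h"
  shows "length (filter (\<lambda>x. h x \<le> m) ys) \<le> m \<longleftrightarrow> (length ys \<le> m \<or> (m < length ys \<and> m < h (ys!m)))"
proof -
  have L: "length (filter (\<lambda>x. h x \<le> m) ys) = card {i. i < length ys \<and> h (ys!i) \<le> m}"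
    by (rule length_filter_conv_card)
  show ?thesis
  proof (cases "length ys \<le> m")
    case True
    have "card {i. i < length ys \<and> h (ys!i) \<le> m} \<le> card {..<length ys}"
      by (rule card_mono) auto
    then show ?thesis using True L by simp
  next
    case False
    show ?thesis
    proof (cases "m < h (ys!m)")
      case True
      have "{i. i < length ys \<and> h (ys!i) \<le> m} \<subseteq> {..<m}"
      proof
        fix i assume i: "i \<in> {i. i < length ys \<and> h (ys!i) \<le> m}"
        show "i \<in> {..<m}"
        proof (rule ccontr)
          assume "i \<notin> {..<m}"
          then have "m \<le> i" by simp
          then have "ys!m \<le> ys!i" using assms(1) i by (simp add: sorted_iff_nth_mono)
          then have "h (ys!m) \<le> h (ys!i)" using assms(2) by (simp add: monoD)
          then show False using i True by simp
        qed
      qed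
      then have "card {i. i < length ys \<and> h (ys!i) \<le> m} \<le> m"
        using card_mono[of "{..<m}"] by fastforce
      then show ?thesis using L True False by simp
    next
      case F2: False
      have "{..m} \<subseteq> {i. i < length ys \<and> h (ys!i) \<le> m}"
      proof
        fix i assume i: "i \<in> {..m}"
        then have "ys!i \<le> ys!m" using assms(1) False by (simp add: sorted_iff_nth_mono)
        then have "h (ys!i) \<le> h (ys!m)" using assms(2) by (simp add: monoD)
        then show "i \<in> {i. i < length ys \<and> h (ys!i) \<le> m}" using i F2 False by auto
      qed
      then have "Suc m \<le> card {i. i < length ys \<and> h (ys!i) \<le> m}"
        using card_mono[of "{i. i < length ys \<and> h (ys!i) \<le> m}" "{..m}"] by simp
      then show ?thesis using L F2 False by simp
    qed
  qed
qed

lemma act_iff: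
  fixes q :: real and w :: nat and X :: "nat \<Rightarrow> nat"
  assumes q: "0 < q" and w: "w \<ge> 2" and iA: "i \<notin> A"
  shows "(real (1 + card (A - {i})) / real (X i + w - 1) > q) \<longleftrightarrow>
         nat \<lfloor>q * real (X i + w - 1)\<rfloor> \<le> card A"
proof -
  have AA: "A - {i} = A" using iA by auto
  have d: "real (X i + w - 1) > 0" using w by simp
  have "(real (1 + card A) / real (X i + w - 1) > q) \<longleftrightarrow> q * real (X i + w - 1) < real (card A) + 1"
    using d by (simp add: pos_less_divide_eq mult.commute add.commute)
  also have "\<dots> \<longleftrightarrow> \<lfloor>q * real (X i + w - 1)\<rfloor> \<le> int (card A)"
    by (simp add: floor_le_iff)
  also have "\<dots> \<longleftrightarrow> nat \<lfloor>q * real (X i + w - 1)\<rfloor> \<le> card A"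
    by linarith
  finally show ?thesis using AA by simp
qed

lemma step_eq:
  fixes q :: real and w :: nat and X :: "nat \<Rightarrow> nat"
  assumes q: "0 < q" and w: "w \<ge> 2"
    and sub: "A \<subseteq> {i \<in> {1..<w}. nat \<lfloor>q * real (X i + w - 1)\<rfloor> \<le> card A}"
  shows "clique_step q w X A = {i \<in> {1..<w}. nat \<lfloor>q * real (X i + w - 1)\<rfloor> \<le> card A}"
  using sub act_iff[OF q w, of _ A X] unfolding clique_step_def by auto

lemma dynamics:
  fixes q :: real and w :: nat and X :: "nat \<Rightarrow> nat"
  assumes q: "0 < q" and w: "w \<ge> 2"
  defines "G \<equiv> \<lambda>m. {i \<in> {1..<w}. nat \<lfloor>q * real (X i + w - 1)\<rfloor> \<le> m}"
  assumes r1: "card (G r) \<le> r" and r2: "\<And>m. m < r \<Longrightarrow> m < card (G m)"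
  shows "final_active q w X = r"
proof -
  define A where "A = clique_active q w X"
  have finG: "finite (G m)" for m unfolding G_def by simp
  have Gmono: "m \<le> m' \<Longrightarrow> G m \<subseteq> G m'" for m m' unfolding G_def by auto
  have cGmono: "m \<le> m' \<Longrightarrow> card (G m) \<le> card (G m')" for m m'
    using Gmono finG card_mono by metis
  have inv: "A k \<subseteq> G (card (A k)) \<and> A (Suc k) = G (card (A k))" for k
  proof (induction k)
    case 0
    have "A 0 \<subseteq> G (card (A 0))" by (simp add: A_def)
    then show ?case using step_eq[OF q w, of "A 0" X] by (simp add: A_def G_def)
  next
    case (Suc k)
    have sub: "A k \<subseteq> A (Suc k)" using Suc by simp
    have "card (A k) \<le> card (A (Suc k))"
      using sub Suc finG by (metis card_mono)
    then have I: "A (Suc k) \<subseteq> G (card (A (Suc k)))" using Suc Gmono by metis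
    then show ?case using step_eq[OF q w, of "A (Suc k)" X] by (simp add: A_def G_def)
  qed
  have up: "card (A k) \<le> r" for k
  proof (induction k)
    case 0 then show ?case by (simp add: A_def)
  next
    case (Suc k)
    have "card (A (Suc k)) = card (G (card (A k)))" using inv by simp
    also have "\<dots> \<le> card (G r)" using cGmono Suc by simp
    finally show ?case using r1 by simp
  qed
  have low: "min k r \<le> card (A k)" for k
  proof (induction k)
    case 0 then show ?case by simp
  next
    case (Suc k)
    show ?case
    proof (cases "card (A k) < r")
      case True
      then have "card (A k) < card (G (card (A k)))" using r2 by simp
      then show ?thesis using inv[of k] Suc by simp
    next
      case False
      then have "card (A k) = r" using up[of k] by simp
      then have "A k \<subseteq> A (Suc k)" "finite (A (Suc k))" using inv[of k] finG by auto
      then have "card (A k) \<le> card (A (Suc k))" by (simp add: card_mono)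
      then show ?thesis using \<open>card (A k) = r\<close> by simp
    qed
  qed
  have UG: "(\<Union>k. A k) \<subseteq> G r"
  proof
    fix x assume "x \<in> (\<Union>k. A k)"
    then obtain k where x: "x \<in> A k" by auto
    have "A k \<subseteq> G (card (A k))" using inv by simp
    also have "\<dots> \<subseteq> G r" using Gmono up by simp
    finally show "x \<in> G r" using x by auto
  qed
  have finU: "finite (\<Union>k. A k)" using UG finG finite_subset by metis
  have "card (\<Union>k. A k) \<le> r" using UG finG r1 card_mono le_trans by metis
  moreover have "r \<le> card (\<Union>k. A k)"
  proof -
    have "r \<le> card (A r)" using low[of r] by simp
    also have "\<dots> \<le> card (\<Union>k. A k)" using finU by (intro card_mono) auto
    finally show ?thesis .
  qed
  ultimately show ?thesis unfolding final_active_def A_def by simp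
qed


lemma aux_nat: "(1 \<le> (i::nat) \<and> i \<le> n \<and> int i < (z::int) + 1) \<longleftrightarrow> (1 \<le> i \<and> i - 1 < n \<and> i - 1 < nat z)"
  by auto

theorem lemma1:
  fixes q :: real and w :: nat and X :: "nat \<Rightarrow> nat"
  assumes "0 < q" and "q < 1" and "w \<ge> 2"
  defines "S \<equiv> {i \<in> {1..w-1}. \<lfloor>q * real (order_stat w X i + w - 1)\<rfloor> + 1 > int i}"
  shows "final_active q w X = (if S = {} then w - 1 else Min S - 1)"
proof -
  note q = assms(1) and w = assms(3)
  define h where "h = (\<lambda>x::nat. nat \<lfloor>q * real (x + w - 1)\<rfloor>)"
  define ys where "ys = sort (map X [1..<w])"
  define G where "G = (\<lambda>m. {i \<in> {1..<w}. nat \<lfloor>q * real (X i + w - 1)\<rfloor> \<le> m})"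
  define n where "n = w - 1"
  have len: "length ys = n" by (simp add: ys_def n_def)
  have hmono: "mono h" unfolding h_def
    by (rule monoI) (use q in \<open>auto intro!: nat_mono floor_mono mult_left_mono\<close>)
  have srt: "sorted ys" by (simp add: ys_def)
  have cardG: "card (G m) = length (filter (\<lambda>x. h x \<le> m) ys)" for m
  proof -
    have "card (G m) = length (filter (\<lambda>i. h (X i) \<le> m) [1..<w])"
      by (subst distinct_length_filter) (auto simp: G_def h_def intro: arg_cong[where f=card])
    also have "\<dots> = length (filter (\<lambda>x. h x \<le> m) (map X [1..<w]))"
      by (simp add: filter_map comp_def)
    also have "\<dots> = length (filter (\<lambda>x. h x \<le> m) ys)"
      unfolding ys_def filter_sort length_sort by (rule refl)
    finally show ?thesis .
  qed
  have Q: "card (G m) \<le> m \<longleftrightarrow> (n \<le> m \<or> (m < n \<and> m < h (ys!m)))" for m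
    using sorted_filter_count[OF srt hmono, of m] cardG len by simp
  have Sdef: "i \<in> S \<longleftrightarrow> (1 \<le> i \<and> i - 1 < n \<and> i - 1 < h (ys!(i-1)))" for i
  proof -
    have "i \<in> S \<longleftrightarrow> (1 \<le> i \<and> i \<le> n \<and> int i < \<lfloor>q * real (ys!(i-1) + w - 1)\<rfloor> + 1)"
      by (simp add: S_def order_stat_def ys_def n_def)
    also have "\<dots> \<longleftrightarrow> (1 \<le> i \<and> i - 1 < n \<and> i - 1 < h (ys!(i-1)))"
      unfolding h_def using aux_nat by blast
    finally show ?thesis .
  qed
  have finS: "finite S" unfolding S_def by simp
  show ?thesis
  proof (cases "S = {}")
    case True
    have h1: "card (G n) \<le> n" using Q by simp
    have h2: "m < card (G m)" if "m < n" for m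
      proof -
        have "Suc m \<notin> S" using True by simp
        then have "\<not> m < h (ys!m)" using Sdef[of "Suc m"] that by simp
        then show ?thesis using Q[of m] that by simp
      qed
    have "final_active q w X = n"
      using dynamics[OF q w, of X n] h1 h2 unfolding G_def by blast
    then show ?thesis using True n_def by simp
  next
    case False
    define r where "r = Min S - 1"
    have MS: "Min S \<in> S" using False finS by simp
    then have r: "r < n \<and> r < h (ys!r)" using Sdef r_def by simp
    have h1: "card (G r) \<le> r" using Q r by simp
    have h2: "m < card (G m)" if "m < r" for m
      proof -
        have "Suc m < Min S" using that r_def MS Sdef by auto
        then have "Suc m \<notin> S" using finS Min_le not_le by blast
        then have "\<not> m < h (ys!m)" using Sdef[of "Suc m"] that r by simp
        then show ?thesis using Q[of m] that r by simp
      qed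
    have "final_active q w X = r"
      using dynamics[OF q w, of X r] h1 h2 unfolding G_def by blast
    then show ?thesis using False r_def by simp
  qed
qed

end
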